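(* Let $T \subseteq \mathbb{Z}_2^\omega$ be a thin set such that $T\cap X\neq\emptyset$ for every equivalence class $X$ of the relation $\sim$ on $\mathbb{Z}_2^\omega$. Then the game $\mathcal{G}(T)$ is undetermined, i.e. neither Ego nor Alter has a winning strategy in $\mathcal{G}(T)$.
   Context: $\mathbb{Z}_2^\omega$ is the set of infinite binary sequences indexed by $\omega=\{0,1,2,\dots\}$; $\mathbb{Z}_2^+=\bigcup_{n\ge1}\mathbb{Z}_2^n$ is the set of nonempty finite binary words. The Hamming distance is $\mathrm{hd}(x,y)=|\{k: x(k)\ne y(k)\}|\in\omega\cup\{\omega\}$, and $x\sim y$ iff $\mathrm{hd}(x,y)$ is finite. A set $T\subseteq\mathbb{Z}_2^\omega$ is thin if for every $n\in\omega$ the map $x\mapsto x|_{\omega\setminus\{n\}}$ is injective on $T$. For $F\subseteq \mathbb{Z}_2^\omega$, $\mathcal{G}(F)$ is the infinite two-player game of perfect information in which Ego and Alter alternately choose words in $\mathbb{Z}_2^+$, Ego moving first; the outcome is the concatenation of all moves, an element of $\mathbb{Z}_2^\omega$, and Ego wins iff the outcome lies in $F$. Strategies for Ego are functions $e:\bigcup_{n\ge0}(\mathbb{Z}_2^+)^n\to\mathbb{Z}_2^+$ of Alter's previous moves, strategies for Alter are functions $a:\bigcup_{n\ge1}(\mathbb{Z}_2^+)^n\to\mathbb{Z}_2^+$ of Ego's previous moves; a strategy is winning for a player if that player wins every play in which he follows it. *)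

theory Defs
  imports Main "HOL-Library.FuncSet"
begin

definition ham_equiv :: "(nat \<Rightarrow> bool) \<Rightarrow> (nat \<Rightarrow> bool) \<Rightarrow> bool" where
  "ham_equiv x y \<longleftrightarrow> finite {k. x k \<noteq> y k}"

definition ham_rel :: "((nat \<Rightarrow> bool) \<times> (nat \<Rightarrow> bool)) set" where
  "ham_rel = {(x, y). ham_equiv x y}"

definition thin :: "(nat \<Rightarrow> bool) set \<Rightarrow> bool" where
  "thin T \<longleftrightarrow> (\<forall>n. inj_on (\<lambda>x. restrict x (- {n})) T)"

definition words :: "bool list list \<Rightarrow> bool" where
  "words xs \<longleftrightarrow> (\<forall>w\<in>set xs. w \<noteq> [])"

text \<open>Ego strategies: from the (possibly empty) list of Alter's previous moves to a word.\<close>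
definition ego_strategy :: "(bool list list \<Rightarrow> bool list) \<Rightarrow> bool" where
  "ego_strategy e \<longleftrightarrow> (\<forall>xs. words xs \<longrightarrow> e xs \<noteq> [])"

text \<open>Alter strategies: from the nonempty list of Ego's previous moves to a word.\<close>
definition alter_strategy :: "(bool list list \<Rightarrow> bool list) \<Rightarrow> bool" where
  "alter_strategy a \<longleftrightarrow> (\<forall>xs. xs \<noteq> [] \<and> words xs \<longrightarrow> a xs \<noteq> [])"

fun rounds :: "(bool list list \<Rightarrow> bool list) \<Rightarrow> (bool list list \<Rightarrow> bool list) \<Rightarrow> nat
    \<Rightarrow> bool list list \<times> bool list list" where
  "rounds e a 0 = ([], [])"
| "rounds e a (Suc n) =
     (let (es, as) = rounds e a n; es' = es @ [e as] in (es', as @ [a es']))"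

definition move :: "(bool list list \<Rightarrow> bool list) \<Rightarrow> (bool list list \<Rightarrow> bool list) \<Rightarrow> nat \<Rightarrow> bool list" where
  "move e a m = (if even m then fst (rounds e a (Suc (m div 2))) ! (m div 2)
                 else snd (rounds e a (Suc (m div 2))) ! (m div 2))"

text \<open>Outcome = concatenation of all moves (each move nonempty, so the prefix of
  the first k+1 moves has length > k).\<close>
definition outcome :: "(bool list list \<Rightarrow> bool list) \<Rightarrow> (bool list list \<Rightarrow> bool list) \<Rightarrow> nat \<Rightarrow> bool" where
  "outcome e a k = concat (map (move e a) [0..<Suc k]) ! k"

definition ego_wins :: "(nat \<Rightarrow> bool) set \<Rightarrow> bool" where
  "ego_wins F \<longleftrightarrow> (\<exists>e. ego_strategy e \<and> (\<forall>a. alter_strategy a \<longrightarrow> outcome e a \<in> F))"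

definition alter_wins :: "(nat \<Rightarrow> bool) set \<Rightarrow> bool" where
  "alter_wins F \<longleftrightarrow> (\<exists>a. alter_strategy a \<and> (\<forall>e. ego_strategy e \<longrightarrow> outcome e a \<notin> F))"

end

theory Submission
  imports Defs "HOL-Library.Nat_Bijection"
begin

definition pflat :: "(nat \<Rightarrow> bool list) \<Rightarrow> nat \<Rightarrow> bool" where
  "pflat M k = concat (map M [0..<Suc k]) ! k"

lemma outcome_pflat: "outcome e a = pflat (move e a)"
  by (rule ext) (simp add: outcome_def pflat_def)

lemma len_concat_ge:
  assumes "\<forall>i. M i \<noteq> []"
  shows "b - c \<le> length (concat (map M [c..<b]))"
proof (induction b)
  case 0 then show ?case by simp
next
  case (Suc b)
  have "M b \<noteq> []" using assms by blast
  then have "length (M b) \<ge> 1" by (cases "M b") auto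
  then show ?case using Suc by (cases "c \<le> b") auto
qed

lemma concat_upt_split:
  "c \<le> b \<Longrightarrow> concat (map M [0..<b]) = concat (map M [0..<c]) @ concat (map M [c..<b])"
  using upt_add_eq_append[of 0 c "b - c"] by simp

lemma pflat_prefix:
  assumes "\<forall>i. M i \<noteq> []" "k < length (concat (map M [0..<n]))"
  shows "pflat M k = concat (map M [0..<n]) ! k"
proof (cases "n \<le> Suc k")
  case True
  have "concat (map M [0..<Suc k]) = concat (map M [0..<n]) @ concat (map M [n..<Suc k])"
    by (rule concat_upt_split[OF True])
  then show ?thesis using assms(2) unfolding pflat_def by (simp add: nth_append del: upt_Suc)
next
  case False
  have l: "Suc k \<le> length (concat (map M [0..<Suc k]))"
    using len_concat_ge[OF assms(1), of "Suc k" 0] by simp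
  have "Suc k \<le> n" using False by simp
  then have "concat (map M [0..<n]) = concat (map M [0..<Suc k]) @ concat (map M [Suc k..<n])"
    by (rule concat_upt_split)
  then show ?thesis using l unfolding pflat_def by (simp add: nth_append del: upt_Suc)
qed

definition EM where "EM e a i = fst (rounds e a (Suc i)) ! i"
definition AM where "AM e a i = snd (rounds e a (Suc i)) ! i"

lemma rounds_len: "length (fst (rounds e a n)) = n \<and> length (snd (rounds e a n)) = n"
  by (induction n) (auto simp: Let_def split: prod.splits)

lemma rounds_Suc_fst: "fst (rounds e a (Suc n)) = fst (rounds e a n) @ [e (snd (rounds e a n))]"
  by (simp add: Let_def split: prod.splits)

lemma rounds_Suc_snd: "snd (rounds e a (Suc n)) = snd (rounds e a n) @ [a (fst (rounds e a (Suc n)))]"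
  by (simp add: Let_def split: prod.splits)

declare rounds.simps(2)[simp del]

lemma rounds_fst_map: "fst (rounds e a n) = map (EM e a) [0..<n]"
proof (induction n)
  case 0 then show ?case by simp
next
  case (Suc n)
  have "EM e a n = e (snd (rounds e a n))"
    unfolding EM_def rounds_Suc_fst using rounds_len[of e a n] by (simp add: nth_append)
  then show ?case using Suc by (simp add: rounds_Suc_fst)
qed

lemma rounds_snd_map: "snd (rounds e a n) = map (AM e a) [0..<n]"
proof (induction n)
  case 0 then show ?case by simp
next
  case (Suc n)
  have "AM e a n = a (fst (rounds e a (Suc n)))"
    unfolding AM_def rounds_Suc_snd using rounds_len[of e a n] by (simp add: nth_append)
  then show ?case using Suc by (simp only: rounds_Suc_snd) simp
qed

lemma EM_rec: "EM e a i = e (map (AM e a) [0..<i])"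
  unfolding EM_def rounds_Suc_fst using rounds_len[of e a i]
  by (simp add: nth_append rounds_snd_map)

lemma AM_rec: "AM e a i = a (map (EM e a) [0..<Suc i])"
  unfolding AM_def rounds_Suc_snd using rounds_len[of e a i]
  by (simp add: nth_append rounds_fst_map del: upt_Suc)

lemma move_even: "move e a (2*i) = EM e a i"
  by (simp add: move_def EM_def)

lemma move_odd: "move e a (Suc (2*i)) = AM e a i"
  by (simp add: move_def AM_def)

lemma moves_nonempty:
  assumes "ego_strategy e" "alter_strategy a"
  shows "\<forall>i<n. EM e a i \<noteq> [] \<and> AM e a i \<noteq> []"
proof (induction n)
  case 0 then show ?case by simp
next
  case (Suc n)
  have w1: "words (map (AM e a) [0..<n])" using Suc by (auto simp: words_def)
  have e1: "EM e a n \<noteq> []" using assms(1) w1 by (simp add: EM_rec ego_strategy_def)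
  have w2: "words (map (EM e a) [0..<Suc n])" using Suc e1 by (auto simp: words_def less_Suc_eq)
  have ne: "map (EM e a) [0..<Suc n] \<noteq> []" by (simp del: upt_Suc)
  have as: "\<forall>xs. xs \<noteq> [] \<and> words xs \<longrightarrow> a xs \<noteq> []" using assms(2) unfolding alter_strategy_def .
  have "a (map (EM e a) [0..<Suc n]) \<noteq> []" using as w2 ne by blast
  then have am: "AM e a n \<noteq> []" by (subst AM_rec)
  show ?case
  proof (intro allI impI)
    fix i assume "i < Suc n"
    then consider "i < n" | "i = n" by linarith
    then show "EM e a i \<noteq> [] \<and> AM e a i \<noteq> []"
    proof cases
      case 1 then show ?thesis using Suc.IH by blast
    next
      case 2 then show ?thesis using e1 am by blast
    qed
  qed
qed

lemma move_nonempty: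
  assumes "ego_strategy e" "alter_strategy a"
  shows "\<forall>i. move e a i \<noteq> []"
proof
  fix i
  show "move e a i \<noteq> []"
  proof (cases "even i")
    case True
    then obtain k where k: "i = 2*k" by blast
    have "EM e a k \<noteq> []" using moves_nonempty[OF assms, of "Suc k"] by blast
    then show ?thesis unfolding k move_even .
  next
    case False
    then obtain k where "i = 2*k + 1" by (rule oddE)
    then have k: "i = Suc (2*k)" by simp
    have "AM e a k \<noteq> []" using moves_nonempty[OF assms, of "Suc k"] by blast
    then show ?thesis unfolding k move_odd .
  qed
qed

lemma concat_shift2:
  "concat (map M [0..<n+2]) = M 0 @ M 1 @ concat (map (\<lambda>i. M (i+2)) [0..<n])"
  by (induction n) auto

lemma concat_shift1:
  "concat (map D [0..<Suc n]) = D 0 @ concat (map (\<lambda>i. D (Suc i)) [0..<n])"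
  by (induction n) auto

lemma thinD:
  assumes "thin T" "x \<in> T" "y \<in> T" "\<forall>k. k \<noteq> n \<longrightarrow> x k = y k"
  shows "x = y"
proof -
  have "restrict x (- {n}) = restrict y (- {n})"
    using assms(4) by (auto simp: restrict_def)
  then show ?thesis using assms(1-3) unfolding thin_def inj_on_def by blast
qed

fun gg :: "(bool list list \<Rightarrow> bool list) \<Rightarrow> nat \<Rightarrow> bool list list \<times> bool list list" where
  "gg e 0 = ([[False]], [True # e [[False]]])"
| "gg e (Suc n) = (let (as, bs) = gg e n; as' = as @ [e bs] in (as', bs @ [e as']))"

definition GA where "GA e i = fst (gg e i) ! i"
definition GB where "GB e i = snd (gg e i) ! i"

lemma gg_len: "length (fst (gg e n)) = Suc n \<and> length (snd (gg e n)) = Suc n"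
  by (induction n) (auto simp: Let_def split: prod.splits)

lemma gg_Suc_fst: "fst (gg e (Suc n)) = fst (gg e n) @ [e (snd (gg e n))]"
  by (simp add: Let_def split: prod.splits)

lemma gg_Suc_snd: "snd (gg e (Suc n)) = snd (gg e n) @ [e (fst (gg e (Suc n)))]"
  by (simp add: Let_def split: prod.splits)

declare gg.simps(2)[simp del]

lemma GA_0: "GA e 0 = [False]" by (simp add: GA_def)
lemma GB_0: "GB e 0 = True # e [[False]]" by (simp add: GB_def)

lemma gg_fst_map: "fst (gg e n) = map (GA e) [0..<Suc n]"
proof (induction n)
  case 0 then show ?case by (simp add: GA_0)
next
  case (Suc n)
  have "GA e (Suc n) = e (snd (gg e n))"
    unfolding GA_def gg_Suc_fst using gg_len[of e n] by (simp add: nth_append)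
  then show ?case using Suc by (simp only: gg_Suc_fst) simp
qed

lemma gg_snd_map: "snd (gg e n) = map (GB e) [0..<Suc n]"
proof (induction n)
  case 0 then show ?case by (simp add: GB_0)
next
  case (Suc n)
  have "GB e (Suc n) = e (fst (gg e (Suc n)))"
    unfolding GB_def gg_Suc_snd using gg_len[of e n] by (simp add: nth_append)
  then show ?case using Suc by (simp only: gg_Suc_snd) simp
qed

lemma GA_Suc: "GA e (Suc n) = e (map (GB e) [0..<Suc n])"
  unfolding GA_def gg_Suc_fst using gg_len[of e n] by (simp add: nth_append gg_snd_map del: upt_Suc)

lemma GB_Suc: "GB e (Suc n) = e (map (GA e) [0..<Suc (Suc n)])"
proof -
  have "GB e (Suc n) = e (fst (gg e (Suc n)))"
    unfolding GB_def gg_Suc_snd using gg_len[of e n] by (simp add: nth_append)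
  then show ?thesis by (simp only: gg_fst_map)
qed

lemma gg_nonempty:
  assumes "ego_strategy e"
  shows "\<forall>i\<le>n. GA e i \<noteq> [] \<and> GB e i \<noteq> []"
proof (induction n)
  case 0 then show ?case by (simp add: GA_0 GB_0)
next
  case (Suc n)
  have es: "\<forall>xs. words xs \<longrightarrow> e xs \<noteq> []" using assms unfolding ego_strategy_def .
  have "words (map (GB e) [0..<Suc n])" unfolding words_def
  proof
    fix w assume "w \<in> set (map (GB e) [0..<Suc n])"
    then obtain i where i: "i < Suc n" "w = GB e i" by (auto simp del: upt_Suc)
    then have "i \<le> n" by simp
    then have "GB e i \<noteq> []" using Suc.IH by simp
    then show "w \<noteq> []" using i by simp
  qed
  from es[rule_format, OF this] have a1: "GA e (Suc n) \<noteq> []" by (subst GA_Suc)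
  have "words (map (GA e) [0..<Suc (Suc n)])" unfolding words_def
  proof
    fix w assume "w \<in> set (map (GA e) [0..<Suc (Suc n)])"
    then obtain i where i: "i < Suc (Suc n)" "w = GA e i" by (auto simp del: upt_Suc)
    show "w \<noteq> []"
    proof (cases "i = Suc n")
      case True then show ?thesis using a1 i by simp
    next
      case False then have "i \<le> n" using i by simp
      then have "GA e i \<noteq> []" using Suc.IH by simp
      then show ?thesis using i by simp
    qed
  qed
  from es[rule_format, OF this] have b1: "GB e (Suc n) \<noteq> []" by (subst GB_Suc)
  show ?case
  proof (intro allI impI)
    fix i assume "i \<le> Suc n"
    then consider "i \<le> n" | "i = Suc n" by linarith
    then show "GA e i \<noteq> [] \<and> GB e i \<noteq> []"
    proof cases
      case 1 then show ?thesis using Suc.IH by simp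
    next
      case 2 then show ?thesis using a1 b1 by simp
    qed
  qed
qed

lemma ego_not_wins:
  assumes thin: "thin T"
  shows "\<not> ego_wins T"
proof
  assume "ego_wins T"
  then obtain e where es: "ego_strategy e"
    and win: "\<forall>a. alter_strategy a \<longrightarrow> outcome e a \<in> T"
    unfolding ego_wins_def by blast
  define aA where "aA = (\<lambda>xs::bool list list. GA e (length xs - 1))"
  define aB where "aB = (\<lambda>xs::bool list list. GB e (length xs - 1))"
  have GAne: "GA e i \<noteq> [] \<and> GB e i \<noteq> []" for i using gg_nonempty[OF es, of i] by simp
  have saA: "alter_strategy aA" by (simp add: alter_strategy_def aA_def GAne)
  have saB: "alter_strategy aB" by (simp add: alter_strategy_def aB_def GAne)
  have AMA: "AM e aA i = GA e i" for i by (simp add: AM_rec aA_def del: upt_Suc)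
  have AMB: "AM e aB i = GB e i" for i by (simp add: AM_rec aB_def del: upt_Suc)
  have AMAf: "AM e aA = GA e" by (rule ext) (rule AMA)
  have AMBf: "AM e aB = GB e" by (rule ext) (rule AMB)
  have EMA: "EM e aA i = e (map (GA e) [0..<i])" for i by (simp add: EM_rec AMAf del: upt_Suc)
  have EMB: "EM e aB i = e (map (GB e) [0..<i])" for i by (simp add: EM_rec AMBf del: upt_Suc)
  define D where "D i = (if even i then e (map (GA e) [0..<Suc (i div 2)])
                         else e (map (GB e) [0..<Suc (i div 2)]))" for i
  have MA: "move e aA (n+2) = D n" for n
  proof (cases "even n")
    case True
    then obtain k where k: "n = 2*k" by blast
    have "move e aA (n+2) = move e aA (2 * Suc k)" using k by simp
    also have "\<dots> = e (map (GA e) [0..<Suc k])" unfolding move_even EMA ..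
    also have "\<dots> = D n" using k by (simp add: D_def del: upt_Suc)
    finally show ?thesis .
  next
    case False
    then obtain k where "n = 2*k + 1" by (rule oddE)
    then have k: "n = Suc (2*k)" by simp
    have "move e aA (n+2) = move e aA (Suc (2 * Suc k))" using k by simp
    also have "\<dots> = GA e (Suc k)" unfolding move_odd AMA ..
    also have "\<dots> = e (map (GB e) [0..<Suc k])" by (rule GA_Suc)
    also have "\<dots> = D n" using k by (simp add: D_def del: upt_Suc)
    finally show ?thesis .
  qed
  have MB: "move e aB (n+2) = D (Suc n)" for n
  proof (cases "even n")
    case True
    then obtain k where k: "n = 2*k" by blast
    have "move e aB (n+2) = move e aB (2 * Suc k)" using k by simp
    also have "\<dots> = e (map (GB e) [0..<Suc k])" unfolding move_even EMB ..
    also have "\<dots> = D (Suc n)" using k by (simp add: D_def del: upt_Suc)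
    finally show ?thesis .
  next
    case False
    then obtain k where "n = 2*k + 1" by (rule oddE)
    then have k: "n = Suc (2*k)" by simp
    have "move e aB (n+2) = move e aB (Suc (2 * Suc k))" using k by simp
    also have "\<dots> = GB e (Suc k)" unfolding move_odd AMB ..
    also have "\<dots> = e (map (GA e) [0..<Suc (Suc k)])" by (rule GB_Suc)
    also have "\<dots> = D (Suc n)" using k by (simp add: D_def del: upt_Suc)
    finally show ?thesis .
  qed
  have mA0: "move e aA 0 = e []" using move_even[of e aA 0] by (simp add: EMA)
  have mB0: "move e aB 0 = e []" using move_even[of e aB 0] by (simp add: EMB)
  have mA1: "move e aA 1 = [False]" using move_odd[of e aA 0] by (simp add: AMA GA_0)
  have D0: "D 0 = e [[False]]" by (simp add: D_def GA_0)
  have mB1: "move e aB 1 = True # D 0" using move_odd[of e aB 0] by (simp add: AMB GB_0 D0)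
  have MAf: "(\<lambda>i. move e aA (i+2)) = D" by (rule ext) (rule MA)
  have MBf: "(\<lambda>i. move e aB (i+2)) = (\<lambda>i. D (Suc i))" by (rule ext) (rule MB)
  have cA: "concat (map (move e aA) [0..<n+2]) = e [] @ [False] @ concat (map D [0..<n])" for n
  proof -
    have "concat (map (move e aA) [0..<n+2]) = move e aA 0 @ move e aA 1 @ concat (map (\<lambda>i. move e aA (i+2)) [0..<n])"
      by (rule concat_shift2)
    also have "\<dots> = e [] @ [False] @ concat (map D [0..<n])" unfolding MAf mA0 mA1 ..
    finally show ?thesis .
  qed
  have cB: "concat (map (move e aB) [0..<n+2]) = e [] @ [True] @ concat (map D [0..<Suc n])" for n
  proof -
    have "concat (map (move e aB) [0..<n+2]) = move e aB 0 @ move e aB 1 @ concat (map (\<lambda>i. move e aB (i+2)) [0..<n])"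
      by (rule concat_shift2)
    also have "\<dots> = e [] @ (True # D 0) @ concat (map (\<lambda>i. D (Suc i)) [0..<n])" unfolding MBf mB0 mB1 ..
    also have "\<dots> = e [] @ [True] @ concat (map D [0..<Suc n])"
      unfolding concat_shift1[of D n] by simp
    finally show ?thesis .
  qed
  have neA: "\<forall>i. move e aA i \<noteq> []" by (rule move_nonempty[OF es saA])
  have neB: "\<forall>i. move e aB i \<noteq> []" by (rule move_nonempty[OF es saB])
  define w where "w = e []"
  define R where "R m = concat (map D [0..<Suc m])" for m
  have xA: "outcome e aA m = (w @ [False] @ R m) ! m" for m
  proof -
    have "Suc m + 2 \<le> length (concat (map (move e aA) [0..<Suc m + 2]))"
      using len_concat_ge[OF neA, of "Suc m + 2" 0] by simp
    then have "m < length (concat (map (move e aA) [0..<Suc m + 2]))" by simp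
    from pflat_prefix[OF neA this] show ?thesis
      unfolding outcome_pflat cA w_def R_def by simp
  qed
  have xB: "outcome e aB m = (w @ [True] @ R m) ! m" for m
  proof -
    have "m + 2 \<le> length (concat (map (move e aB) [0..<m + 2]))"
      using len_concat_ge[OF neB, of "m + 2" 0] by simp
    then have "m < length (concat (map (move e aB) [0..<m + 2]))" by simp
    from pflat_prefix[OF neB this] show ?thesis
      unfolding outcome_pflat cB w_def R_def by simp
  qed
  have agree: "\<forall>k. k \<noteq> length w \<longrightarrow> outcome e aA k = outcome e aB k"
  proof (intro allI impI)
    fix k assume k: "k \<noteq> length w"
    show "outcome e aA k = outcome e aB k"
    proof (cases "k < length w")
      case True then show ?thesis unfolding xA xB by (simp add: nth_append)
    next
      case False
      then have "k - length w = Suc (k - length w - 1)" using k by simp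
      then show ?thesis using False unfolding xA xB by (simp add: nth_append)
    qed
  qed
  have "outcome e aA = outcome e aB"
    using thinD[OF thin _ _ agree] win saA saB by blast
  moreover have "outcome e aA (length w) = False" unfolding xA by (simp add: nth_append)
  moreover have "outcome e aB (length w) = True" unfolding xB by (simp add: nth_append)
  ultimately show False by simp
qed


definition ut :: "nat \<Rightarrow> nat \<Rightarrow> nat" where "ut j i = Suc (prod_encode (i, j))"
definition stt :: "nat \<Rightarrow> nat \<Rightarrow> nat" where
  "stt j k = (case k of 0 \<Rightarrow> 0 | Suc k' \<Rightarrow> Suc (ut j k'))"
definition sgm :: "(nat \<Rightarrow> bool list) \<Rightarrow> nat \<Rightarrow> nat \<Rightarrow> bool list" where
  "sgm C j k = concat (map C [stt j k..<ut j k])"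
definition xorb :: "nat \<Rightarrow> bool list \<Rightarrow> bool list" where
  "xorb j L = map (\<lambda>i. L ! i \<noteq> bit j i) [0..<length L]"
definition emv :: "(nat \<Rightarrow> bool list) \<Rightarrow> nat \<Rightarrow> nat \<Rightarrow> bool list" where
  "emv C j k = (if k = 0 then xorb j (sgm C j 0) else sgm C j k)"
definition grp :: "(nat \<Rightarrow> bool list) \<Rightarrow> nat \<Rightarrow> nat \<Rightarrow> bool list" where
  "grp C j k = (if even k then sgm C j (k div 2) else C (ut j (k div 2)))"
definition stepC :: "(bool list list \<Rightarrow> bool list) \<Rightarrow> bool list list \<Rightarrow> bool list" where
  "stepC a L = (if L = [] then [False] else
     a (map (emv (\<lambda>n. L ! n) (snd (prod_decode (length L - 1))))
            [0..<Suc (fst (prod_decode (length L - 1)))]))"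

fun Cl :: "(bool list list \<Rightarrow> bool list) \<Rightarrow> nat \<Rightarrow> bool list list" where
  "Cl a 0 = []"
| "Cl a (Suc n) = Cl a n @ [stepC a (Cl a n)]"

definition CC where "CC a c = Cl a (Suc c) ! c"

lemma Cl_len: "length (Cl a n) = n"
  by (induction n) auto

lemma Cl_map: "Cl a n = map (CC a) [0..<n]"
proof (induction n)
  case 0 then show ?case by simp
next
  case (Suc n)
  have "CC a n = stepC a (Cl a n)" unfolding CC_def using Cl_len[of a n] by (simp add: nth_append)
  then show ?case using Suc by simp
qed

lemma CC_rec: "CC a c = stepC a (map (CC a) [0..<c])"
proof -
  have "CC a c = stepC a (Cl a c)" unfolding CC_def using Cl_len[of a c] by (simp add: nth_append)
  then show ?thesis unfolding Cl_map .
qed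

lemma ut_gap: "Suc (ut j k) < ut j (Suc k)"
  by (simp add: ut_def prod_encode_def)

lemma stt_less: "stt j k < ut j k"
proof (cases k)
  case 0 then show ?thesis by (simp add: stt_def ut_def)
next
  case (Suc k') then show ?thesis using ut_gap[of j k'] by (simp add: stt_def)
qed

lemma ut_mono:
  assumes "k \<le> i" shows "ut j k \<le> ut j i"
proof -
  have h: "ut j n \<le> ut j (Suc n)" for n using ut_gap[of j n] by simp
  show ?thesis using lift_Suc_mono_le[of "ut j", OF h assms] .
qed

lemma triangle_ge: "j \<le> triangle j"
  by (induction j) auto

lemma ut0_gt: "j < ut j 0"
  using triangle_ge[of j] by (simp add: ut_def prod_encode_def)

lemma sgm_cong:
  assumes "\<forall>n<ut j k. C n = D n" shows "sgm C j k = sgm D j k"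
proof -
  have "map C [stt j k..<ut j k] = map D [stt j k..<ut j k]"
    by (rule map_cong) (use assms in auto)
  then show ?thesis unfolding sgm_def by (rule arg_cong[where f=concat])
qed

lemma emv_cong: "(\<forall>n<ut j k. C n = D n) \<Longrightarrow> emv C j k = emv D j k"
  unfolding emv_def using sgm_cong[of j 0 C D] sgm_cong[of j k C D] by simp

lemma sgm_nonempty: "(\<forall>n<ut j k. C n \<noteq> []) \<Longrightarrow> sgm C j k \<noteq> []"
proof -
  assume h: "\<forall>n<ut j k. C n \<noteq> []"
  have "[stt j k..<ut j k] = stt j k # [Suc (stt j k)..<ut j k]"
    using stt_less by (rule upt_conv_Cons)
  then show ?thesis unfolding sgm_def using h stt_less[of j k] by simp
qed

lemma xorb_len: "length (xorb j L) = length L"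
  by (simp add: xorb_def)

lemma emv_nonempty: "(\<forall>n<ut j k. C n \<noteq> []) \<Longrightarrow> emv C j k \<noteq> []"
proof -
  assume h: "\<forall>n<ut j k. C n \<noteq> []"
  have "\<forall>n<ut j 0. C n \<noteq> []" using h ut_mono[of 0 k j] by auto
  then have "sgm C j 0 \<noteq> []" by (rule sgm_nonempty)
  then have "xorb j (sgm C j 0) \<noteq> []" using xorb_len[of j "sgm C j 0"] by auto
  then show ?thesis unfolding emv_def using sgm_nonempty[OF h] by simp
qed

lemma CC_at: "CC a (ut j i) = a (map (emv (CC a) j) [0..<Suc i])"
proof -
  define L where "L = map (CC a) [0..<ut j i]"
  have len: "length L = ut j i" by (simp add: L_def)
  have ne: "L \<noteq> []" using len by (auto simp: ut_def)
  have pd: "prod_decode (length L - 1) = (i, j)" using len by (simp add: ut_def)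
  have meq: "map (emv (\<lambda>n. L ! n) j) [0..<Suc i] = map (emv (CC a) j) [0..<Suc i]"
  proof (rule map_cong)
    fix k assume "k \<in> set [0..<Suc i]"
    then have "ut j k \<le> ut j i" by (intro ut_mono) auto
    then have "\<forall>n<ut j k. L ! n = CC a n" by (simp add: L_def)
    then show "emv (\<lambda>n. L ! n) j k = emv (CC a) j k" by (rule emv_cong)
  qed simp
  have st: "CC a (ut j i) = a (map (emv (\<lambda>n. L ! n) j) [0..<Suc i])"
    using CC_rec[of a "ut j i"] ne pd by (simp add: stepC_def L_def[symmetric] del: upt_Suc)
  show ?thesis using st unfolding meq .
qed

lemma CC_nonempty:
  assumes sa: "alter_strategy a"
  shows "CC a c \<noteq> []"
proof (induction c rule: less_induct)
  case (less c)
  show ?case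
  proof (cases "c = 0")
    case True then show ?thesis using CC_rec[of a 0] by (simp add: stepC_def)
  next
    case False
    obtain i j where pd: "prod_decode (c - 1) = (i, j)" by fastforce
    have "prod_encode (prod_decode (c - 1)) = c - 1" by (rule prod_decode_inverse)
    then have "prod_encode (i, j) = c - 1" unfolding pd .
    then have c: "c = ut j i" using False by (simp add: ut_def)
    have w: "words (map (emv (CC a) j) [0..<Suc i])" unfolding words_def
    proof
      fix w assume "w \<in> set (map (emv (CC a) j) [0..<Suc i])"
      then obtain k where k0: "k < Suc i" "w = emv (CC a) j k" by (auto simp del: upt_Suc)
      then have k: "k \<le> i" "w = emv (CC a) j k" by auto
      have "ut j k \<le> c" using ut_mono[OF k(1)] c by simp
      then have "\<forall>n<ut j k. CC a n \<noteq> []" using less by auto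
      then have "emv (CC a) j k \<noteq> []" by (rule emv_nonempty)
      then show "w \<noteq> []" using k(2) by simp
    qed
    have ne: "map (emv (CC a) j) [0..<Suc i] \<noteq> []" by (simp del: upt_Suc)
    have "a (map (emv (CC a) j) [0..<Suc i]) \<noteq> []"
      using sa w ne unfolding alter_strategy_def by blast
    moreover have "CC a c = a (map (emv (CC a) j) [0..<Suc i])" unfolding c by (rule CC_at)
    ultimately show ?thesis by simp
  qed
qed

lemma concat_grp: "concat (map (grp C j) [0..<2*k]) = concat (map C [0..<stt j k])"
proof (induction k)
  case 0 then show ?case by (simp add: stt_def)
next
  case (Suc k)
  have e1: "[0..<2 * Suc k] = [0..<2*k] @ [2*k, Suc (2*k)]" by simp
  have g1: "grp C j (2*k) = sgm C j k" by (simp add: grp_def)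
  have g2: "grp C j (Suc (2*k)) = C (ut j k)" by (simp add: grp_def)
  have sp: "concat (map C [0..<ut j k]) = concat (map C [0..<stt j k]) @ sgm C j k"
    unfolding sgm_def using stt_less[of j k] by (intro concat_upt_split) simp
  have "concat (map (grp C j) [0..<2 * Suc k]) = concat (map (grp C j) [0..<2*k]) @ grp C j (2*k) @ grp C j (Suc (2*k))"
    unfolding e1 by simp
  also have "\<dots> = concat (map C [0..<stt j k]) @ sgm C j k @ C (ut j k)" unfolding Suc.IH g1 g2 ..
  also have "\<dots> = concat (map C [0..<ut j k]) @ C (ut j k)" unfolding sp by simp
  also have "\<dots> = concat (map C [0..<Suc (ut j k)])" by simp
  also have "\<dots> = concat (map C [0..<stt j (Suc k)])" by (simp add: stt_def)
  finally show ?case .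
qed

lemma bit_high: "(j::nat) \<le> m \<Longrightarrow> \<not> bit j m"
proof -
  assume "j \<le> m"
  then have "j < 2 ^ m" using less_exp[of m] by linarith
  then have d: "j div 2 ^ m = 0" by simp
  have "bit j m = odd (j div 2 ^ m)" by (rule bit_iff_odd)
  then show ?thesis unfolding d by simp
qed

lemma pflat_mod:
  assumes ne: "\<forall>i. C i \<noteq> []"
    and M: "\<forall>k. M k = (if k = 0 then xorb j (grp C j 0) else grp C j k)"
  shows "pflat M m = (pflat C m \<noteq> bit j m)"
proof -
  define G where "G = grp C j"
  have Gne: "G i \<noteq> []" for i
    unfolding G_def grp_def using ne sgm_nonempty[of j _ C] by simp
  have "length (xorb j (G 0)) \<noteq> 0" using Gne[of 0] by (simp add: xorb_len)
  then have x0: "xorb j (G 0) \<noteq> []" by auto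
  have Mne: "\<forall>i. M i \<noteq> []"
  proof
    fix i show "M i \<noteq> []" using M Gne[of i] x0 by (cases "i = 0") (simp_all add: G_def)
  qed
  define N where "N = 2 * Suc m"
  have upt: "[0..<N] = 0 # [1..<N]" by (simp add: N_def upt_conv_Cons)
  have rest: "map M [1..<N] = map G [1..<N]"
    by (rule map_cong) (auto simp: M G_def)
  define Rest where "Rest = concat (map G [1..<N])"
  have X: "concat (map G [0..<N]) = G 0 @ Rest" unfolding Rest_def by (subst upt) simp
  have M0: "M 0 = xorb j (G 0)" using M by (simp add: G_def)
  have Y: "concat (map M [0..<N]) = xorb j (G 0) @ Rest"
  proof -
    have "concat (map M [0..<N]) = M 0 @ concat (map M [1..<N])" by (subst upt) simp
    also have "\<dots> = xorb j (G 0) @ Rest" unfolding rest Rest_def M0 ..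
    finally show ?thesis .
  qed
  have lenG: "N \<le> length (concat (map G [0..<N]))"
    using len_concat_ge[of G N 0] Gne by simp
  have lenX: "m < length (concat (map G [0..<N]))" using lenG by (simp add: N_def)
  have lenY: "m < length (concat (map M [0..<N]))"
    using lenX unfolding X Y by (simp add: xorb_len)
  have pM: "pflat M m = (xorb j (G 0) @ Rest) ! m"
    using pflat_prefix[OF Mne lenY] Y by simp
  have cg: "concat (map G [0..<N]) = concat (map C [0..<stt j (Suc m)])"
    unfolding G_def N_def by (rule concat_grp)
  have pC: "pflat C m = (G 0 @ Rest) ! m"
    using pflat_prefix[OF ne, of m "stt j (Suc m)"] lenX cg X by simp
  show ?thesis
  proof (cases "m < length (G 0)")
    case True
    then show ?thesis unfolding pM pC by (simp add: nth_append xorb_len xorb_def)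
  next
    case False
    have "ut j 0 - 0 \<le> length (G 0)"
      unfolding G_def grp_def sgm_def using len_concat_ge[OF ne, of "ut j 0" 0]
      by (simp add: stt_def)
    then have "j \<le> m" using False ut0_gt[of j] by simp
    then have "\<not> bit j m" by (rule bit_high)
    then show ?thesis using False unfolding pM pC by (simp add: nth_append xorb_len)
  qed
qed

lemma finite_bits: "finite D \<Longrightarrow> \<exists>j::nat. \<forall>k. bit j k \<longleftrightarrow> k \<in> D"
proof (induction rule: finite_induct)
  case empty then show ?case by (intro exI[of _ 0]) simp
next
  case (insert x F)
  then obtain j :: nat where "\<forall>k. bit j k \<longleftrightarrow> k \<in> F" by blast
  then show ?case by (intro exI[of _ "set_bit x j"]) (auto simp: bit_set_bit_iff)
qed

lemma alter_not_wins:
  assumes cls: "\<forall>X \<in> UNIV // ham_rel. T \<inter> X \<noteq> {}"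
  shows "\<not> alter_wins T"
proof
  assume "alter_wins T"
  then obtain a where sa: "alter_strategy a"
    and lose: "\<forall>e. ego_strategy e \<longrightarrow> outcome e a \<notin> T"
    unfolding alter_wins_def by blast
  have CCne: "\<forall>c. CC a c \<noteq> []" using CC_nonempty[OF sa] by blast
  define x where "x = pflat (CC a)"
  have "ham_rel `` {x} \<in> UNIV // ham_rel" by (rule quotientI) simp
  then have "T \<inter> ham_rel `` {x} \<noteq> {}" using cls by blast
  then obtain y where yT: "y \<in> T" and "(x, y) \<in> ham_rel" by blast
  then have "finite {k. x k \<noteq> y k}" by (simp add: ham_rel_def ham_equiv_def)
  from finite_bits[OF this] obtain j :: nat where bj: "\<forall>k. bit j k \<longleftrightarrow> k \<in> {k. x k \<noteq> y k}"
    by (elim exE)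
  define ej where "ej = (\<lambda>xs::bool list list. emv (CC a) j (length xs))"
  have emne: "emv (CC a) j k \<noteq> []" for k by (rule emv_nonempty) (simp add: CCne)
  have sej: "ego_strategy ej" by (simp add: ego_strategy_def ej_def emne)
  have EMf: "EM ej a = emv (CC a) j" by (rule ext) (simp add: EM_rec ej_def)
  have AMk: "AM ej a k = CC a (ut j k)" for k
  proof -
    have "AM ej a k = a (map (EM ej a) [0..<Suc k])" by (rule AM_rec)
    also have "\<dots> = a (map (emv (CC a) j) [0..<Suc k])" unfolding EMf ..
    also have "\<dots> = CC a (ut j k)" by (rule CC_at[symmetric])
    finally show ?thesis .
  qed
  have mv: "\<forall>k. move ej a k = (if k = 0 then xorb j (grp (CC a) j 0) else grp (CC a) j k)"
  proof
    fix k
    show "move ej a k = (if k = 0 then xorb j (grp (CC a) j 0) else grp (CC a) j k)"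
    proof (cases "even k")
      case True
      then obtain i where k: "k = 2*i" by blast
      have "move ej a k = emv (CC a) j i" unfolding k move_even EMf ..
      then show ?thesis using k by (simp add: emv_def grp_def)
    next
      case False
      then obtain i where "k = 2*i + 1" by (rule oddE)
      then have k: "k = Suc (2*i)" by simp
      have "move ej a k = CC a (ut j i)" unfolding k move_odd AMk ..
      then show ?thesis using k by (simp add: grp_def)
    qed
  qed
  have oy: "outcome ej a = y"
  proof
    fix m
    have "outcome ej a m = (pflat (CC a) m \<noteq> bit j m)"
      unfolding outcome_pflat by (rule pflat_mod[OF CCne mv])
    moreover have "bit j m \<longleftrightarrow> x m \<noteq> y m" using bj by simp
    ultimately show "outcome ej a m = y m" unfolding x_def[symmetric] by auto
  qed
  have "outcome ej a \<notin> T" using lose sej by blast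
  then show False using yT oy by simp
qed

theorem proposition8:
  fixes T :: "(nat \<Rightarrow> bool) set"
  assumes "thin T"
    and "\<forall>X \<in> UNIV // ham_rel. T \<inter> X \<noteq> {}"
  shows "\<not> ego_wins T \<and> \<not> alter_wins T"
  using ego_not_wins[OF assms(1)] alter_not_wins[OF assms(2)] by blast

end
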